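(* Let $(M,d,\mu,\mathcal{E},\mathcal{F})$ be a metric measure Dirichlet space (as in the context) with diffusion $(X_t,P^x)$, and let $\epsilon>0$. For every $x\in M$, $P^x$-almost surely the map $t\mapsto V_\epsilon(t)$ is continuous.
   Context: Standing framework: $(M,d)$ non-compact, connected, complete, separable metric space with relatively compact open balls $B(x,r)=\{y:d(x,y)<r\}$; $\mu$ a Borel measure with $0<\mu(U)\le\mu(\overline U)<\infty$ for relatively compact open $U$; for every $x\in M$, $r\ge0$ the sphere $\{y:d(x,y)=r\}$ is nonempty and has $\mu$-measure zero; $(\mathcal{E},\mathcal{F})$ a strongly local, regular, symmetric, conservative Dirichlet form on $L^2(M,\mu)$ whose associated Hunt process $(X_t,P^x)$ (a diffusion, i.e. with continuous paths) has a jointly continuous heat kernel. $V_\epsilon(t)=\mu(\bigcup_{s\in[0,t]}B(X_s,\epsilon))$. *)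

theory Defs
  imports "HOL-Analysis.Analysis" "HOL-Probability.Probability"
begin

text \<open>Standing framework for the metric measure space (M,d,mu).
  M is the whole type 'a, d = dist, B(x,r) = ball x r = {y. dist x y < r}.\<close>
definition mm_space :: "'a::metric_space measure \<Rightarrow> bool" where
  "mm_space \<mu> \<longleftrightarrow>
     \<not> compact (UNIV :: 'a::metric_space set) \<and>
     connected (UNIV :: 'a::metric_space set) \<and>
     Topological_Spaces.complete (UNIV :: 'a::metric_space set) \<and>
     (\<exists>D :: 'a::metric_space set. countable D \<and> closure D = UNIV) \<and>
     (\<forall>(x::'a) r. compact (closure (ball x r))) \<and>
     sets \<mu> = sets borel \<and>
     (\<forall>U. open U \<and> U \<noteq> {} \<and> compact (closure U) \<longrightarrow>
          0 < emeasure \<mu> U \<and> emeasure \<mu> (closure U) < \<infinity>) \<and>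
     (\<forall>x r. r \<ge> 0 \<longrightarrow> {y. dist x y = r} \<noteq> {} \<and> emeasure \<mu> {y. dist x y = r} = 0)"

definition diffusion :: "('a::metric_space \<Rightarrow> 'w measure) \<Rightarrow> (real \<Rightarrow> 'w \<Rightarrow> 'a) \<Rightarrow> bool" where
  "diffusion P X \<longleftrightarrow>
     (\<forall>x. prob_space (P x) \<and>
          (\<forall>t\<ge>0. X t \<in> measurable (P x) borel) \<and>
          (AE \<omega> in P x. X 0 \<omega> = x) \<and>
          (AE \<omega> in P x. continuous_on {0..} (\<lambda>t. X t \<omega>)))"

definition sausage_vol :: "'a::metric_space measure \<Rightarrow> real \<Rightarrow> (real \<Rightarrow> 'w \<Rightarrow> 'a) \<Rightarrow> 'w \<Rightarrow> real \<Rightarrow> ennreal" where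
  "sausage_vol \<mu> \<epsilon> X \<omega> t = emeasure \<mu> (\<Union>s\<in>{0..t}. ball (X s \<omega>) \<epsilon>)"

end

theory Submission
  imports Defs
begin

lemma sausage_cont_det:
  fixes \<mu> :: "'a::metric_space measure" and \<gamma> :: "real \<Rightarrow> 'a" and \<epsilon> :: real
  assumes mm: "mm_space \<mu>" and g: "continuous_on {0..} \<gamma>" and ep: "\<epsilon> > 0"
  shows "continuous_on {0..} (\<lambda>t. emeasure \<mu> (\<Union>s\<in>{0..t}. ball (\<gamma> s) \<epsilon>))"
proof (rule continuous_on_sequentiallyI)
  define U where "U t = (\<Union>s\<in>{0..t}. ball (\<gamma> s) \<epsilon>)" for t
  have sets: "sets \<mu> = sets borel" using mm unfolding mm_space_def by blast
  have cpt: "\<And>x r. compact (closure (ball (x::'a) r))" using mm unfolding mm_space_def by blast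
  have fin: "\<And>U. open U \<Longrightarrow> U \<noteq> {} \<Longrightarrow> compact (closure U) \<Longrightarrow> emeasure \<mu> (closure U) < \<infinity>"
    using mm unfolding mm_space_def by blast
  have sph: "\<And>x r. r \<ge> 0 \<Longrightarrow> emeasure \<mu> {y. dist x y = r} = 0"
    using mm unfolding mm_space_def by blast
  have Umeas: "U t \<in> sets \<mu>" for t
    unfolding U_def sets by (intro borel_open open_UN) auto
  fix u :: "nat \<Rightarrow> real" and a :: real
  assume u0: "\<forall>n. u n \<in> {0..}" and a0: "a \<in> {0..}" and ua: "u \<longlonglongrightarrow> a"
  have "bounded (range u)" using ua by (simp add: convergent_imp_bounded)
  then obtain B where B: "\<And>n. \<bar>u n\<bar> \<le> B" unfolding bounded_iff by auto
  define T where "T = max a B"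
  have uT: "u n \<le> T" for n using B[of n] unfolding T_def by auto
  have "compact (\<gamma> ` {0..T})"
    by (rule compact_continuous_image) (auto intro: continuous_on_subset[OF g])
  then have "bounded (\<gamma> ` {0..T})" by (rule compact_imp_bounded)
  then obtain R where R0: "\<forall>z\<in>\<gamma> ` {0..T}. dist (\<gamma> 0) z \<le> R"
    using bounded_any_center[of "\<gamma> ` {0..T}" "\<gamma> 0"] by blast
  have R: "\<And>s. s \<in> {0..T} \<Longrightarrow> dist (\<gamma> 0) (\<gamma> s) \<le> R" using R0 by blast
  have Usub: "U T \<subseteq> ball (\<gamma> 0) (R + \<epsilon>)"
  proof
    fix y assume "y \<in> U T"
    then obtain s where s: "s \<in> {0..T}" "dist (\<gamma> s) y < \<epsilon>" unfolding U_def by auto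
    have "dist (\<gamma> 0) y \<le> dist (\<gamma> 0) (\<gamma> s) + dist (\<gamma> s) y" by (rule dist_triangle)
    then show "y \<in> ball (\<gamma> 0) (R + \<epsilon>)" using R[OF s(1)] s(2) by simp
  qed
  have "0 \<le> T" using a0 unfolding T_def by auto
  then have "dist (\<gamma> 0) (\<gamma> 0) \<le> R" using R[of 0] by auto
  then have Rpos: "R + \<epsilon> > 0" using ep by simp
  have "emeasure \<mu> (U T) \<le> emeasure \<mu> (closure (ball (\<gamma> 0) (R + \<epsilon>)))"
    by (rule emeasure_mono) (use Usub closure_subset in \<open>auto simp: sets\<close>)
  also have "\<dots> < \<infinity>" using Rpos by (intro fin cpt) auto
  finally have UTfin: "emeasure \<mu> (U T) < \<infinity>" .
  have mono: "s \<le> t \<Longrightarrow> U s \<subseteq> U t" for s t unfolding U_def by (intro UN_mono) auto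
  have conv: "AE y in \<mu>. (\<lambda>n. indicator (U (u n)) y :: ennreal) \<longlonglongrightarrow> indicator (U a) y"
  proof (rule AE_I')
    show "{y. dist (\<gamma> a) y = \<epsilon>} \<in> null_sets \<mu>"
      proof -
        have c: "closed {y. dist (\<gamma> a) y = \<epsilon>}"
          by (intro closed_Collect_eq continuous_intros)
        have "{y. dist (\<gamma> a) y = \<epsilon>} \<in> sets \<mu>" unfolding sets using c by (rule borel_closed)
        then show ?thesis using sph[of \<epsilon> "\<gamma> a"] ep by (simp add: null_sets_def)
      qed
  next
    show "{y \<in> space \<mu>. \<not> (\<lambda>n. indicator (U (u n)) y :: ennreal) \<longlonglongrightarrow> indicator (U a) y} \<subseteq> {y. dist (\<gamma> a) y = \<epsilon>}"
    proof (clarify, rule ccontr)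
      fix y assume nc: "\<not> (\<lambda>n. indicator (U (u n)) y :: ennreal) \<longlonglongrightarrow> indicator (U a) y"
        and ne: "dist (\<gamma> a) y \<noteq> \<epsilon>"
      show False
      proof (cases "y \<in> U a")
        case True
        then obtain s where s: "s \<in> {0..a}" "dist (\<gamma> s) y < \<epsilon>" unfolding U_def by auto
        have "\<exists>s'\<in>{0..a}. (s' < a \<or> s' = 0) \<and> dist (\<gamma> s') y < \<epsilon>"
        proof (cases "s < a \<or> s = 0")
          case True then show ?thesis using s by blast
        next
          case False
          then have sa: "s = a" "a > 0" using s by auto
          obtain d where d: "d > 0" "\<And>x'. x' \<in> {0..} \<Longrightarrow> dist x' a < d \<Longrightarrow> dist (\<gamma> x') (\<gamma> a) < \<epsilon> - dist (\<gamma> a) y"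
            proof -
            have "\<epsilon> - dist (\<gamma> a) y > 0" using s sa by simp
            then have "\<exists>d>0. \<forall>x'\<in>{0..}. dist x' a < d \<longrightarrow> dist (\<gamma> x') (\<gamma> a) < \<epsilon> - dist (\<gamma> a) y"
              using g a0 unfolding continuous_on_iff by blast
            then show ?thesis using that by blast
          qed
          define s' where "s' = max 0 (a - d/2)"
          have s'1: "s' \<in> {0..a}" "s' < a" using sa d unfolding s'_def by auto
          have "dist s' a < d" using sa d unfolding s'_def dist_real_def by auto
          then have "dist (\<gamma> s') (\<gamma> a) < \<epsilon> - dist (\<gamma> a) y" using d s'1 by auto
          moreover have "dist (\<gamma> s') y \<le> dist (\<gamma> s') (\<gamma> a) + dist (\<gamma> a) y" by (rule dist_triangle)
          ultimately show ?thesis using s'1 by (intro bexI[of _ s']) auto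
        qed
        then obtain s' where s': "s' \<in> {0..a}" "s' < a \<or> s' = 0" "dist (\<gamma> s') y < \<epsilon>" by blast
        have "eventually (\<lambda>n. s' \<le> u n) sequentially"
        proof (cases "s' < a")
          case True
          from order_tendstoD(1)[OF ua True] show ?thesis by eventually_elim auto
        next
          case False then have "s' = 0" using s' by auto
          then show ?thesis using u0 by auto
        qed
        then have "eventually (\<lambda>n. indicator (U (u n)) y = (indicator (U a) y :: ennreal)) sequentially"
        proof eventually_elim
          case (elim n)
          then have "y \<in> U (u n)" using s' unfolding U_def by (intro UN_I[of s']) auto
          then show ?case using True by simp
        qed
        then have "(\<lambda>n. indicator (U (u n)) y :: ennreal) \<longlonglongrightarrow> indicator (U a) y" by (rule tendsto_eventually)
        then show False using nc by contradiction
      next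
        case False
        have ge: "dist (\<gamma> a) y \<ge> \<epsilon>"
        proof (rule ccontr)
          assume "\<not> dist (\<gamma> a) y \<ge> \<epsilon>"
          then have "y \<in> U a" unfolding U_def using a0 by (intro UN_I[of a]) auto
          then show False using False by blast
        qed
        with ne have gt: "dist (\<gamma> a) y > \<epsilon>" by simp
        obtain d where d: "d > 0" "\<And>x'. x' \<in> {0..} \<Longrightarrow> dist x' a < d \<Longrightarrow> dist (\<gamma> x') (\<gamma> a) < dist (\<gamma> a) y - \<epsilon>"
        proof -
          have "dist (\<gamma> a) y - \<epsilon> > 0" using gt by simp
          then have "\<exists>d>0. \<forall>x'\<in>{0..}. dist x' a < d \<longrightarrow> dist (\<gamma> x') (\<gamma> a) < dist (\<gamma> a) y - \<epsilon>"
            using g a0 unfolding continuous_on_iff by blast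
          then show ?thesis using that by blast
        qed
        have "eventually (\<lambda>n. dist (u n) a < d) sequentially"
          using ua d(1) unfolding tendsto_iff by blast
        then have "eventually (\<lambda>n. indicator (U (u n)) y = (indicator (U a) y :: ennreal)) sequentially"
        proof eventually_elim
          case (elim n)
          have "y \<notin> U (u n)"
          proof
            assume "y \<in> U (u n)"
            then obtain s where s: "s \<in> {0..u n}" "dist (\<gamma> s) y < \<epsilon>" unfolding U_def by auto
            show False
            proof (cases "s \<le> a")
              case True
              then have "y \<in> U a" unfolding U_def using s by (intro UN_I[of s]) auto
              then show False using False by blast
            next
              case sa: False
              have "dist s a < d" using elim s sa unfolding dist_real_def by auto
              then have "dist (\<gamma> s) (\<gamma> a) < dist (\<gamma> a) y - \<epsilon>" using d s by auto
              moreover have "dist (\<gamma> a) y \<le> dist (\<gamma> a) (\<gamma> s) + dist (\<gamma> s) y" by (rule dist_triangle)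
              ultimately show False using s by (simp add: dist_commute)
            qed
          qed
          then show ?case using False by simp
        qed
        then have "(\<lambda>n. indicator (U (u n)) y :: ennreal) \<longlonglongrightarrow> indicator (U a) y" by (rule tendsto_eventually)
        then show False using nc by contradiction
      qed
    qed
  qed
  have "(\<lambda>n. \<integral>\<^sup>+y. indicator (U (u n)) y \<partial>\<mu>) \<longlonglongrightarrow> (\<integral>\<^sup>+y. indicator (U a) y \<partial>\<mu>)"
  proof (rule nn_integral_dominated_convergence[where w="indicator (U T)"])
    show "\<And>i. indicator (U (u i)) \<in> borel_measurable \<mu>" using Umeas by simp
    show "indicator (U a) \<in> borel_measurable \<mu>" using Umeas by simp
    show "indicator (U T) \<in> borel_measurable \<mu>" using Umeas by simp
    show "\<And>j. AE x in \<mu>. indicator (U (u j)) x \<le> (indicator (U T) x :: ennreal)"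
      using mono[OF uT] by (auto simp: indicator_def)
    show "(\<integral>\<^sup>+x. indicator (U T) x \<partial>\<mu>) < \<infinity>" using UTfin Umeas by simp
    show "AE x in \<mu>. (\<lambda>i. indicator (U (u i)) x) \<longlonglongrightarrow> (indicator (U a) x :: ennreal)" by (rule conv)
  qed
  then show "(\<lambda>n. emeasure \<mu> (\<Union>s\<in>{0..u n}. ball (\<gamma> s) \<epsilon>)) \<longlonglongrightarrow> emeasure \<mu> (\<Union>s\<in>{0..a}. ball (\<gamma> s) \<epsilon>)"
    using Umeas by (simp add: U_def)
qed

theorem lemma2p3:
  fixes \<mu> :: "'a::metric_space measure"
    and P :: "'a \<Rightarrow> 'w measure"
    and X :: "real \<Rightarrow> 'w \<Rightarrow> 'a"
    and \<epsilon> :: real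
  assumes "mm_space \<mu>"
    and "diffusion P X"
    and "\<epsilon> > 0"
  shows "\<forall>x. AE \<omega> in P x. continuous_on {0..} (sausage_vol \<mu> \<epsilon> X \<omega>)"
proof
  fix x
  have "AE \<omega> in P x. continuous_on {0..} (\<lambda>t. X t \<omega>)" using assms(2) unfolding diffusion_def by blast
  then show "AE \<omega> in P x. continuous_on {0..} (sausage_vol \<mu> \<epsilon> X \<omega>)"
  proof eventually_elim
    case (elim \<omega>)
    show ?case unfolding sausage_vol_def[abs_def]
      using sausage_cont_det[OF assms(1) elim assms(3)] by simp
  qed
qed

end
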